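(* Let $K>0$ and let $\psi$ be a PTL formula over $\Sigma$ with operator depth $\mathrm{od}(\psi)\le K$. Then for all $u,v,s,t\in\Sigma^*$: $u(st)^Ksv\models\psi$ if and only if $u(st)^Kv\models\psi$.
   Context: PTL formulas over a finite alphabet $\Sigma$ are built from $\pi_a$ ($a\in\Sigma$), $\wedge$, $\neg$ and $\mathbf{P}$; for $w=w_1\cdots w_N$ and $n\in\{1,\dots,N+1\}$: $w,n\models\pi_a$ iff $n\le N$ and $w_n=a$; Boolean connectives as usual; $w,n\models\mathbf{P}\psi$ iff $w,m\models\psi$ for some $1\le m<n$. $w\models\psi$ means $w,|w|+1\models\psi$. The operator depth is defined by $\mathrm{od}(\pi_a)=0$, $\mathrm{od}(\psi_1\wedge\psi_2)=\max(\mathrm{od}(\psi_1),\mathrm{od}(\psi_2))$, $\mathrm{od}(\neg\psi)=\mathrm{od}(\psi)$, $\mathrm{od}(\mathbf{P}\psi)=\mathrm{od}(\psi)+1$. $(st)^K$ denotes the $K$-fold concatenation of $st$. *)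

theory Defs
  imports Main
begin

datatype 'a ptl = Atom 'a | Conj "'a ptl" "'a ptl" | Neg "'a ptl" | Past "'a ptl"

text \<open>Satisfaction at position n (positions are 1-based, 1..N+1 for a word of length N).\<close>
fun sat :: "'a list \<Rightarrow> nat \<Rightarrow> 'a ptl \<Rightarrow> bool" where
  "sat w n (Atom a) = (1 \<le> n \<and> n \<le> length w \<and> w ! (n - 1) = a)"
| "sat w n (Conj f g) = (sat w n f \<and> sat w n g)"
| "sat w n (Neg f) = (\<not> sat w n f)"
| "sat w n (Past f) = (\<exists>m. 1 \<le> m \<and> m < n \<and> sat w m f)"

definition models :: "'a list \<Rightarrow> 'a ptl \<Rightarrow> bool" where
  "models w f = sat w (length w + 1) f"

fun od :: "'a ptl \<Rightarrow> nat" where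
  "od (Atom a) = 0"
| "od (Conj f g) = max (od f) (od g)"
| "od (Neg f) = od f"
| "od (Past f) = od f + 1"

definition wpow :: "'a list \<Rightarrow> nat \<Rightarrow> 'a list" where
  "wpow x K = concat (replicate K x)"

end

theory Submission
  imports Defs
begin

definition EE :: "nat \<Rightarrow> 'a list \<Rightarrow> 'a list \<Rightarrow> bool" where
  "EE d w w' = (\<forall>f. od f \<le> d \<longrightarrow> models w f = models w' f)"

lemma EE_sym: "EE d w w' \<Longrightarrow> EE d w' w"
  by (auto simp: EE_def)

lemma EE_refl: "EE d w w"
  by (auto simp: EE_def)

lemma sat_prefix: "m \<le> length p \<Longrightarrow> sat (p @ q) m f = sat p m f"
  by (induction f arbitrary: m) (auto simp: nth_append)

lemma od0: "od f = 0 \<Longrightarrow> models w f = models w' f"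
  by (induction f) (auto simp: models_def)

lemma EE0: "EE 0 w w'"
  using od0 by (auto simp: EE_def)

definition satl :: "'a list \<Rightarrow> 'a \<Rightarrow> 'a ptl \<Rightarrow> bool" where
  "satl q a g = sat (q @ [a]) (length q + 1) g"

lemma models_Past: "models w (Past g) \<longleftrightarrow> (\<exists>q a r. w = q @ a # r \<and> satl q a g)"
proof
  assume "models w (Past g)"
  then obtain m where m: "1 \<le> m" "m < length w + 1" "sat w m g" by (auto simp: models_def)
  define q where "q = take (m-1) w"
  define a where "a = w!(m-1)"
  define r where "r = drop m w"
  have ml: "m - 1 < length w" using m by simp
  have sm: "Suc (m - 1) = m" using m by simp
  have d: "a # r = drop (m-1) w"
    unfolding a_def r_def using Cons_nth_drop_Suc[OF ml] sm by simp
  have w: "q @ a # r = w"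
    unfolding q_def d by simp
  have lq: "length q = m - 1" using m unfolding q_def by simp
  have "sat w m g = sat ((q @ [a]) @ r) m g"
    using w by simp
  also have "\<dots> = satl q a g"
    unfolding satl_def using m lq by (subst sat_prefix) auto
  finally have "satl q a g" using m(3) by simp
  then show "\<exists>q a r. w = q @ a # r \<and> satl q a g" using w[symmetric] by blast
next
  assume "\<exists>q a r. w = q @ a # r \<and> satl q a g"
  then obtain q a r where h: "w = q @ a # r" "satl q a g" by blast
  have "sat ((q @ [a]) @ r) (length q + 1) g" using h(2) unfolding satl_def
    by (subst sat_prefix) auto
  then show "models w (Past g)" using h(1) unfolding models_def
    by (auto intro!: exI[of _ "length q + 1"])
qed

lemma satl_Past: "satl q a (Past h) = models q (Past h)"
  unfolding satl_def models_def
  by (auto simp: sat_prefix)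

lemma lemC: "EE k q q' \<Longrightarrow> od g \<le> k \<Longrightarrow> satl q a g = satl q' a g"
proof (induction g)
  case (Atom b) then show ?case by (simp add: satl_def nth_append)
next
  case (Conj g1 g2) then show ?case by (simp add: satl_def)
next
  case (Neg g) then show ?case by (simp add: satl_def)
next
  case (Past h) then show ?case by (simp add: satl_Past EE_def)
qed

lemma lemB:
  assumes "\<And>q a r. w = q @ a # r \<Longrightarrow> \<exists>q' r'. w' = q' @ a # r' \<and> EE d q q'"
    and "\<And>q a r. w' = q @ a # r \<Longrightarrow> \<exists>q' r'. w = q' @ a # r' \<and> EE d q q'"
  shows "EE (Suc d) w w'"
  unfolding EE_def
proof (intro allI impI)
  fix f :: "'a ptl" assume "od f \<le> Suc d"
  then show "models w f = models w' f"
  proof (induction f)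
    case (Atom x) then show ?case by (simp add: models_def)
  next
    case (Conj f1 f2) then show ?case by (simp add: models_def)
  next
    case (Neg f) then show ?case by (simp add: models_def)
  next
    case (Past g)
    then have og: "od g \<le> d" by simp
    show ?case
    proof
      assume "models w (Past g)"
      then obtain q a r where "w = q @ a # r" "satl q a g" by (auto simp: models_Past)
      with assms(1) obtain q' r' where "w' = q' @ a # r'" and e: "EE d q q'" by blast
      have "satl q' a g" using lemC[OF e og] \<open>satl q a g\<close> by simp
      then show "models w' (Past g)" using \<open>w' = q' @ a # r'\<close> by (auto simp: models_Past)
    next
      assume "models w' (Past g)"
      then obtain q a r where "w' = q @ a # r" "satl q a g" by (auto simp: models_Past)
      with assms(2) obtain q' r' where "w = q' @ a # r'" and e: "EE d q q'" by blast
      have "satl q' a g" using lemC[OF e og] \<open>satl q a g\<close> by simp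
      then show "models w (Past g)" using \<open>w = q' @ a # r'\<close> by (auto simp: models_Past)
    qed
  qed
qed

lemma split2: "A @ B = q @ a # r \<Longrightarrow>
  (\<exists>r0. A = q @ a # r0 \<and> r = r0 @ B) \<or> (\<exists>b. B = b @ a # r \<and> q = A @ b)"
  by (auto simp: append_eq_append_conv2 append_eq_Cons_conv)

lemma wpow_Suc: "wpow x (Suc m) = wpow x m @ x"
  unfolding wpow_def by (induct m) auto

lemma lemG: "d \<le> n \<Longrightarrow> x = y @ y2 \<Longrightarrow>
   EE d (u @ wpow x n @ y @ z) (u @ wpow x n @ z)"
proof (induction d arbitrary: n y y2 z)
  case 0 show ?case by (rule EE0)
next
  case (Suc d)
  obtain m where n: "n = Suc m" using Suc.prems by (cases n) auto
  have dm: "d \<le> m" "d \<le> n" using Suc.prems n by auto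
  show ?case
  proof (rule lemB)
    fix q a r assume h: "u @ wpow x n @ y @ z = q @ a # r"
    then have h': "(u @ wpow x n) @ (y @ z) = q @ a # r" by simp
    from split2[OF h'] show "\<exists>q' r'. u @ wpow x n @ z = q' @ a # r' \<and> EE d q q'"
    proof
      assume "\<exists>r0. u @ wpow x n = q @ a # r0 \<and> r = r0 @ y @ z"
      then obtain r0 where "u @ wpow x n = q @ a # r0" by blast
      then have "u @ wpow x n @ z = q @ a # (r0 @ z)" by simp
      then show ?thesis using EE_refl by blast
    next
      assume "\<exists>b. y @ z = b @ a # r \<and> q = (u @ wpow x n) @ b"
      then obtain b where b: "y @ z = b @ a # r" "q = (u @ wpow x n) @ b" by blast
      from split2[OF b(1)] show ?thesis
      proof
        assume "\<exists>r0. y = b @ a # r0 \<and> r = r0 @ z"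
        then obtain r0 where r0: "y = b @ a # r0" by blast
        have "u @ wpow x n @ z = (u @ wpow x m @ b) @ a # (r0 @ y2 @ z)"
          using r0 Suc.prems(2) n by (simp add: wpow_Suc)
        moreover have "EE d (u @ wpow x m @ x @ b) (u @ wpow x m @ b)"
          using Suc.IH[OF dm(1), of x "[]" b] by simp
        moreover have "q = u @ wpow x m @ x @ b" using b(2) n by (simp add: wpow_Suc)
        ultimately show ?thesis by blast
      next
        assume "\<exists>c. z = c @ a # r \<and> b = y @ c"
        then obtain c where c: "z = c @ a # r" "b = y @ c" by blast
        have "u @ wpow x n @ z = (u @ wpow x n @ c) @ a # r" using c by simp
        moreover have "EE d q (u @ wpow x n @ c)"
          using Suc.IH[OF dm(2) Suc.prems(2), of c] b(2) c(2) by simp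
        ultimately show ?thesis by blast
      qed
    qed
  next
    fix q a r assume h: "u @ wpow x n @ z = q @ a # r"
    then have h': "(u @ wpow x n) @ z = q @ a # r" by simp
    from split2[OF h'] show "\<exists>q' r'. u @ wpow x n @ y @ z = q' @ a # r' \<and> EE d q q'"
    proof
      assume "\<exists>r0. u @ wpow x n = q @ a # r0 \<and> r = r0 @ z"
      then obtain r0 where "u @ wpow x n = q @ a # r0" by blast
      then have "u @ wpow x n @ y @ z = q @ a # (r0 @ y @ z)" by simp
      then show ?thesis using EE_refl by blast
    next
      assume "\<exists>c. z = c @ a # r \<and> q = (u @ wpow x n) @ c"
      then obtain c where c: "z = c @ a # r" "q = (u @ wpow x n) @ c" by blast
      have "u @ wpow x n @ y @ z = (u @ wpow x n @ y @ c) @ a # r" using c by simp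
      moreover have "EE d q (u @ wpow x n @ y @ c)"
        using EE_sym[OF Suc.IH[OF dm(2) Suc.prems(2), of c]] c(2) by simp
      ultimately show ?thesis by blast
    qed
  qed
qed

theorem mainTheorem11:
  fixes \<psi> :: "('a::finite) ptl" and K :: nat and u v s t :: "'a list"
  assumes "K > 0" and "od \<psi> \<le> K"
  shows "models (u @ wpow (s @ t) K @ s @ v) \<psi> \<longleftrightarrow> models (u @ wpow (s @ t) K @ v) \<psi>"
  using lemG[of K K "s @ t" s t u v] assms(2) unfolding EE_def by blast

end
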